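(* Let $R$ be a preference profile and suppose that $x$ is a connector in $R$. Let $y\in A_x$. Then $A_y\subseteq A_x$ unless $x\succ_R A\setminus\{x,y\}$ (i.e., unless $x\succ_R z$ for all $z\in A\setminus\{x,y\}$).
   Context: Let $A$ be a finite set of alternatives; a preference profile $R$ assigns a strict total order $\succ_i$ on $A$ to each voter $i$ of a finite non-empty electorate. The majority margin is $g_R(x,y)=|\{i: x\succ_i y\}|-|\{i: y\succ_i x\}|$; $x\succsim_R y$ iff $g_R(x,y)\ge0$, with strict part $\succ_R$. For any set of alternatives $B$ and profile $R$ on $B$, a non-empty $X\subseteq B$ is dominant if $x\succ_R y$ for all $x\in X,y\in B\setminus X$; the top cycle $\mathrm{TC}(R)$ is the inclusion-smallest dominant set. For $x\in A$, $R|_{A\setminus\{x\}}$ denotes the profile on $A\setminus\{x\}$ obtained by restricting each voter's order. The connected set of $x$ is $A_x=\mathrm{TC}(R)\setminus(\mathrm{TC}(R|_{A\setminus\{x\}})\cup\{x\})$, and $x$ is a connector in $R$ if $A_x\neq\emptyset$. *)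

theory Defs
  imports Main
begin

text \<open>A preference profile on the alternatives A: a finite non-empty electorate N and,
for each voter i in N, a strict total order (R i) on A, where (a,b) \<in> R i means a \<succ>_i b.\<close>

definition profile :: "'v set \<Rightarrow> 'a set \<Rightarrow> ('v \<Rightarrow> ('a \<times> 'a) set) \<Rightarrow> bool" where
  "profile N A R \<longleftrightarrow> finite N \<and> N \<noteq> {} \<and> finite A \<and>
     (\<forall>i\<in>N. strict_linear_order_on A (R i) \<and> R i \<subseteq> A \<times> A)"

definition margin :: "'v set \<Rightarrow> ('v \<Rightarrow> ('a \<times> 'a) set) \<Rightarrow> 'a \<Rightarrow> 'a \<Rightarrow> int" where
  "margin N R x y = int (card {i\<in>N. (x,y) \<in> R i}) - int (card {i\<in>N. (y,x) \<in> R i})"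

definition maj_strict :: "'v set \<Rightarrow> ('v \<Rightarrow> ('a \<times> 'a) set) \<Rightarrow> 'a \<Rightarrow> 'a \<Rightarrow> bool" where
  "maj_strict N R x y \<longleftrightarrow> margin N R x y > 0"

text \<open>Dominant sets w.r.t. the profile R restricted to the alternative set B.
(Restricting each voter's order to B does not change margins between elements of B.)\<close>
definition dominant :: "'v set \<Rightarrow> ('v \<Rightarrow> ('a \<times> 'a) set) \<Rightarrow> 'a set \<Rightarrow> 'a set \<Rightarrow> bool" where
  "dominant N R B X \<longleftrightarrow> X \<noteq> {} \<and> X \<subseteq> B \<and> (\<forall>x\<in>X. \<forall>y\<in>B - X. maj_strict N R x y)"

definition top_cycle :: "'v set \<Rightarrow> ('v \<Rightarrow> ('a \<times> 'a) set) \<Rightarrow> 'a set \<Rightarrow> 'a set" where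
  "top_cycle N R B = (THE X. dominant N R B X \<and> (\<forall>Y. dominant N R B Y \<longrightarrow> X \<subseteq> Y))"

definition connected_set :: "'v set \<Rightarrow> 'a set \<Rightarrow> ('v \<Rightarrow> ('a \<times> 'a) set) \<Rightarrow> 'a \<Rightarrow> 'a set" where
  "connected_set N A R x = top_cycle N R A - (top_cycle N R (A - {x}) \<union> {x})"

definition connector :: "'v set \<Rightarrow> 'a set \<Rightarrow> ('v \<Rightarrow> ('a \<times> 'a) set) \<Rightarrow> 'a \<Rightarrow> bool" where
  "connector N A R x \<longleftrightarrow> x \<in> A \<and> connected_set N A R x \<noteq> {}"

end

theory Submission
  imports Defs
begin

lemma ms_asym: "maj_strict N R a b \<Longrightarrow> \<not> maj_strict N R b a"
  by (simp add: maj_strict_def margin_def)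

lemma dom_chain:
  assumes "dominant N R B X" "dominant N R B Y"
  shows "X \<subseteq> Y \<or> Y \<subseteq> X"
proof (rule ccontr)
  assume "\<not> (X \<subseteq> Y \<or> Y \<subseteq> X)"
  then obtain a b where "a \<in> X" "a \<notin> Y" "b \<in> Y" "b \<notin> X" by blast
  then have "maj_strict N R a b" "maj_strict N R b a" using assms unfolding dominant_def by auto
  then show False by (simp add: maj_strict_def margin_def)
qed

lemma tc_ex:
  assumes "finite B" "B \<noteq> {}"
  shows "\<exists>X. dominant N R B X \<and> (\<forall>Y. dominant N R B Y \<longrightarrow> X \<subseteq> Y)"
proof -
  have "dominant N R B B" using assms by (simp add: dominant_def)
  then obtain X where X: "dominant N R B X" "\<forall>Y. dominant N R B Y \<longrightarrow> card X \<le> card Y"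
    using ex_has_least_nat[where P="dominant N R B" and m=card] by blast
  have "\<forall>Y. dominant N R B Y \<longrightarrow> X \<subseteq> Y"
  proof (intro allI impI)
    fix Y assume Y: "dominant N R B Y"
    have fX: "finite X" using X(1) assms(1) unfolding dominant_def using finite_subset by blast
    show "X \<subseteq> Y"
    proof (cases "X \<subseteq> Y")
      case False
      then have "Y \<subseteq> X" using dom_chain[OF X(1) Y] by blast
      then have "Y = X" using card_subset_eq[OF fX] X(2) Y by (meson le_antisym card_mono fX)
      then show ?thesis by simp
    qed simp
  qed
  then show ?thesis using X by blast
qed

lemma tc:
  assumes "finite B" "B \<noteq> {}"
  shows "dominant N R B (top_cycle N R B) \<and> (\<forall>Y. dominant N R B Y \<longrightarrow> top_cycle N R B \<subseteq> Y)"
proof -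
  have "\<exists>!X. dominant N R B X \<and> (\<forall>Y. dominant N R B Y \<longrightarrow> X \<subseteq> Y)"
    using tc_ex[OF assms] by (meson subset_antisym)
  then show ?thesis unfolding top_cycle_def by (rule theI')
qed

lemma domD: "dominant N R B X \<Longrightarrow> u \<in> X \<Longrightarrow> w \<in> B \<Longrightarrow> w \<notin> X \<Longrightarrow> maj_strict N R u w"
  unfolding dominant_def by blast

lemma domS: "dominant N R B X \<Longrightarrow> X \<subseteq> B"
  unfolding dominant_def by blast

lemma domNE: "dominant N R B X \<Longrightarrow> X \<noteq> {}"
  unfolding dominant_def by blast

lemma domI: "X \<noteq> {} \<Longrightarrow> X \<subseteq> B \<Longrightarrow> (\<And>u w. u \<in> X \<Longrightarrow> w \<in> B \<Longrightarrow> w \<notin> X \<Longrightarrow> maj_strict N R u w) \<Longrightarrow> dominant N R B X"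
  unfolding dominant_def by blast

theorem lemma3:
  fixes N :: "'v set" and A :: "'a set" and R :: "'v \<Rightarrow> ('a \<times> 'a) set" and x y :: 'a
  assumes "profile N A R"
    and "connector N A R x"
    and "y \<in> connected_set N A R x"
  shows "connected_set N A R y \<subseteq> connected_set N A R x
         \<or> (\<forall>z\<in>A - {x, y}. maj_strict N R x z)"
proof -
  define T where "T = top_cycle N R A"
  define Tx where "Tx = top_cycle N R (A - {x})"
  define Ty where "Ty = top_cycle N R (A - {y})"
  have fA: "finite A" using assms(1) by (simp add: profile_def)
  have yT: "y \<in> T" "y \<noteq> x" "y \<notin> Tx" using assms(3) unfolding connected_set_def T_def Tx_def by auto
  have xA: "x \<in> A" using assms(2) by (simp add: connector_def)
  have T: "dominant N R A T" "\<And>Y. dominant N R A Y \<Longrightarrow> T \<subseteq> Y"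
    using tc[OF fA] xA unfolding T_def by auto
  have yA: "y \<in> A" using domS[OF T(1)] yT by auto
  have Tx: "dominant N R (A - {x}) Tx" "\<And>Y. dominant N R (A - {x}) Y \<Longrightarrow> Tx \<subseteq> Y"
    using tc[of "A - {x}" N R] fA yA yT unfolding Tx_def by auto
  have Ty: "dominant N R (A - {y}) Ty" "\<And>Y. dominant N R (A - {y}) Y \<Longrightarrow> Ty \<subseteq> Y"
    using tc[of "A - {y}" N R] fA xA yT unfolding Ty_def by auto
  have TxA: "Tx \<subseteq> A - {x}" using domS[OF Tx(1)] .
  have TyA: "Ty \<subseteq> A - {y}" using domS[OF Ty(1)] .
  have Txy: "\<And>u. u \<in> Tx \<Longrightarrow> maj_strict N R u y" using domD[OF Tx(1)] yT yA by auto
  have xT: "x \<in> T"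
  proof (rule ccontr)
    assume nx: "x \<notin> T"
    have "dominant N R (A - {x}) T"
      using domS[OF T(1)] domNE[OF T(1)] domD[OF T(1)] nx by (intro domI) auto
    then have "Tx \<subseteq> T" using Tx(2) by simp
    then have "dominant N R A Tx"
    proof (intro domI)
      fix u w assume "Tx \<subseteq> T" "u \<in> Tx" "w \<in> A" "w \<notin> Tx"
      then show "maj_strict N R u w"
        using domD[OF Tx(1), of u w] domD[OF T(1), of u x] nx xA by (cases "w = x") auto
    qed (use domS[OF Tx(1)] domNE[OF Tx(1)] in auto)
    then have "T \<subseteq> Tx" using T(2) by simp
    then show False using yT by auto
  qed
  show ?thesis
  proof (cases "x \<in> Ty")
    case False
    have d1: "dominant N R (A - {x, y}) Tx"
      using domNE[OF Tx(1)] domD[OF Tx(1)] TxA yT by (intro domI) auto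
    have d2: "dominant N R (A - {x, y}) Ty"
      using domNE[OF Ty(1)] domD[OF Ty(1)] TyA False by (intro domI) auto
    obtain M where M: "dominant N R (A - {x, y}) M" "M \<subseteq> Tx" "M \<subseteq> Ty"
      using dom_chain[OF d1 d2] d1 d2 by auto
    have MA: "M \<subseteq> A - {x, y}" using domS[OF M(1)] .
    have "dominant N R A M"
    proof (rule domI)
      show "M \<noteq> {}" using domNE[OF M(1)] .
      show "M \<subseteq> A" using MA by auto
    next
      fix u w assume u: "u \<in> M" and w: "w \<in> A" "w \<notin> M"
      show "maj_strict N R u w"
      proof (cases "w = x")
        case True then show ?thesis using domD[OF Ty(1), of u x] False u M(3) xA yT by auto
      next
        case wx: False
        show ?thesis
        proof (cases "w = y")
          case True then show ?thesis using Txy u M(2) by auto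
        next
          case False then show ?thesis using domD[OF M(1), of u w] u w wx by auto
        qed
      qed
    qed
    then have "T \<subseteq> M" using T(2) by simp
    then show ?thesis using xT M(3) False by auto
  next
    case True
    show ?thesis
    proof (cases "Ty = {x}")
      case True
      have "\<forall>z\<in>A - {x, y}. maj_strict N R x z" using domD[OF Ty(1)] True by auto
      then show ?thesis by simp
    next
      case False
      have d1: "dominant N R (A - {x, y}) Tx"
        using domNE[OF Tx(1)] domD[OF Tx(1)] TxA yT by (intro domI) auto
      have ne: "Ty - {x} \<noteq> {}" using False True by auto
      have d2: "dominant N R (A - {x, y}) (Ty - {x})"
        using ne domD[OF Ty(1)] TyA by (intro domI) auto
      have "connected_set N A R y \<subseteq> connected_set N A R x"
      proof
        fix z assume z: "z \<in> connected_set N A R y"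
        then have zz: "z \<in> T" "z \<notin> Ty" "z \<noteq> y" unfolding connected_set_def T_def Ty_def by auto
        have "z \<noteq> x" using zz True by auto
        moreover have "z \<notin> Tx"
        proof
          assume zx: "z \<in> Tx"
          have sub: "Ty - {x} \<subseteq> Tx" using dom_chain[OF d1 d2] zz zx by auto
          have "dominant N R (A - {x}) (Ty - {x})"
          proof (rule domI)
            show "Ty - {x} \<noteq> {}" using ne .
            show "Ty - {x} \<subseteq> A - {x}" using TyA by auto
          next
            fix u w assume u: "u \<in> Ty - {x}" and w: "w \<in> A - {x}" "w \<notin> Ty - {x}"
            show "maj_strict N R u w"
            proof (cases "w = y")
              case True then show ?thesis using Txy u sub by auto
            next
              case False then show ?thesis using domD[OF d2, of u w] u w by auto
            qed
          qed
          then have "Tx \<subseteq> Ty - {x}" using Tx(2) by simp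
          then show False using zx zz by auto
        qed
        ultimately show "z \<in> connected_set N A R x"
          using zz unfolding connected_set_def T_def Tx_def by auto
      qed
      then show ?thesis by simp
    qed
  qed
qed

end
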